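(* Let $(\mathbf{X},\mathbf{p})$ be a $\{1,k\}$-payment equilibrium. If agent $i\in N_H$ is pEF1 towards every other agent, then $|X_i\cap L|\le\min_{j\in N_L}|X_j|$.
   Context: Fix $k>1$. Agents $N$, chores $M$, additive costs $c_i(e)\in\{1,k\}$. An allocation $\mathbf{X}$ partitions $M$ into bundles $X_i$. A payment vector assigns $p(e)>0$, $p(X)=\sum_{e\in X}p(e)$; $\alpha_{i,e}=c_i(e)/p(e)$, $\alpha_i=\min_e\alpha_{i,e}$, $\mathsf{MPB}_i=\{e:\alpha_{i,e}=\alpha_i\}$; $(\mathbf{X},\mathbf{p})$ is a $\{1,k\}$-payment equilibrium if $X_i\subseteq\mathsf{MPB}_i$ for all $i$ and $p(e)\in\{1,k\}$ for all $e$. $L=\{e:p(e)=1\}$, $H=\{e:p(e)=k\}$, $N_L=\{i:X_i\subseteq L\}$, $N_H=\{i:|X_i\cap H|\ge1\}$. Agent $i$ is pEF1 towards $j$ if $X_i=\emptyset$ or there is $e\in X_i$ with $p(X_i\setminus\{e\})\le p(X_j)$. *)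

theory Defs
  imports Complex_Main
begin

definition is_allocation :: "'a set \<Rightarrow> 'c set \<Rightarrow> ('a \<Rightarrow> 'c set) \<Rightarrow> bool" where
  "is_allocation N M X \<longleftrightarrow>
     (\<forall>i\<in>N. X i \<subseteq> M) \<and>
     (\<forall>i\<in>N. \<forall>j\<in>N. i \<noteq> j \<longrightarrow> X i \<inter> X j = {}) \<and>
     (\<Union>i\<in>N. X i) = M"

definition pay :: "('c \<Rightarrow> real) \<Rightarrow> 'c set \<Rightarrow> real" where
  "pay p S = (\<Sum>e\<in>S. p e)"

definition alpha :: "('a \<Rightarrow> 'c \<Rightarrow> real) \<Rightarrow> ('c \<Rightarrow> real) \<Rightarrow> 'a \<Rightarrow> 'c \<Rightarrow> real" where
  "alpha c p i e = c i e / p e"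

definition MPB :: "'c set \<Rightarrow> ('a \<Rightarrow> 'c \<Rightarrow> real) \<Rightarrow> ('c \<Rightarrow> real) \<Rightarrow> 'a \<Rightarrow> 'c set" where
  "MPB M c p i = {e \<in> M. \<forall>e'\<in>M. alpha c p i e \<le> alpha c p i e'}"

definition one_k_payment_equilibrium ::
  "real \<Rightarrow> 'a set \<Rightarrow> 'c set \<Rightarrow> ('a \<Rightarrow> 'c \<Rightarrow> real) \<Rightarrow> ('a \<Rightarrow> 'c set) \<Rightarrow> ('c \<Rightarrow> real) \<Rightarrow> bool" where
  "one_k_payment_equilibrium k N M c X p \<longleftrightarrow>
     is_allocation N M X \<and>
     (\<forall>e\<in>M. p e \<in> {1, k}) \<and>
     (\<forall>i\<in>N. X i \<subseteq> MPB M c p i)"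

definition Lset :: "'c set \<Rightarrow> ('c \<Rightarrow> real) \<Rightarrow> 'c set" where
  "Lset M p = {e \<in> M. p e = 1}"

definition Hset :: "real \<Rightarrow> 'c set \<Rightarrow> ('c \<Rightarrow> real) \<Rightarrow> 'c set" where
  "Hset k M p = {e \<in> M. p e = k}"

definition N_L :: "'a set \<Rightarrow> 'c set \<Rightarrow> ('a \<Rightarrow> 'c set) \<Rightarrow> ('c \<Rightarrow> real) \<Rightarrow> 'a set" where
  "N_L N M X p = {i \<in> N. X i \<subseteq> Lset M p}"

definition N_H :: "real \<Rightarrow> 'a set \<Rightarrow> 'c set \<Rightarrow> ('a \<Rightarrow> 'c set) \<Rightarrow> ('c \<Rightarrow> real) \<Rightarrow> 'a set" where
  "N_H k N M X p = {i \<in> N. card (X i \<inter> Hset k M p) \<ge> 1}"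

definition pEF1 :: "('a \<Rightarrow> 'c set) \<Rightarrow> ('c \<Rightarrow> real) \<Rightarrow> 'a \<Rightarrow> 'a \<Rightarrow> bool" where
  "pEF1 X p i j \<longleftrightarrow> X i = {} \<or> (\<exists>e\<in>X i. pay p (X i - {e}) \<le> pay p (X j))"

end

theory Submission
  imports Defs
begin

theorem lemma6:
  fixes k :: real and N :: "'a set" and M :: "'c set"
    and c :: "'a \<Rightarrow> 'c \<Rightarrow> real" and X :: "'a \<Rightarrow> 'c set" and p :: "'c \<Rightarrow> real"
  assumes "k > 1"
    and "finite N" and "finite M"
    and "\<forall>i\<in>N. \<forall>e\<in>M. c i e \<in> {1, k}"
    and "one_k_payment_equilibrium k N M c X p"
    and "i \<in> N_H k N M X p"
    and "\<forall>j\<in>N. j \<noteq> i \<longrightarrow> pEF1 X p i j"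
  shows "\<forall>j\<in>N_L N M X p. card (X i \<inter> Lset M p) \<le> card (X j)"
proof
  fix j assume j: "j \<in> N_L N M X p"
  have alloc: "is_allocation N M X" and pv: "\<forall>e\<in>M. p e \<in> {1, k}"
    using assms(5) unfolding one_k_payment_equilibrium_def by auto
  have iN: "i \<in> N" and cH: "card (X i \<inter> Hset k M p) \<ge> 1" using assms(6) unfolding N_H_def by auto
  have jN: "j \<in> N" and jL: "X j \<subseteq> Lset M p" using j unfolding N_L_def by auto
  have XiM: "X i \<subseteq> M" and XjM: "X j \<subseteq> M" using alloc iN jN unfolding is_allocation_def by auto
  have finXi: "finite (X i)" using XiM assms(3) finite_subset by blast
  have finXj: "finite (X j)" using XjM assms(3) finite_subset by blast
  have "X i \<inter> Hset k M p \<noteq> {}" using cH by (metis card.empty not_one_le_zero)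
  then obtain e0 where e0: "e0 \<in> X i" "p e0 = k" unfolding Hset_def by auto
  have "j \<noteq> i" using jL e0 assms(1) unfolding Lset_def by auto
  then have "pEF1 X p i j" using assms(7) jN by auto
  moreover have "X i \<noteq> {}" using e0 by auto
  ultimately obtain e where e: "e \<in> X i" and pe: "pay p (X i - {e}) \<le> pay p (X j)"
    unfolding pEF1_def by auto
  have pXj: "pay p (X j) = real (card (X j))"
    unfolding pay_def using jL unfolding Lset_def by (simp add: subset_iff)
  have pos: "\<And>x. x \<in> X i \<Longrightarrow> p x \<ge> 0" using pv XiM assms(1) by fastforce
  have pL: "pay p (X i \<inter> Lset M p) = real (card (X i \<inter> Lset M p))"
    unfolding pay_def Lset_def by simp
  have "real (card (X i \<inter> Lset M p)) \<le> pay p (X i - {e})"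
  proof (cases "e \<in> Lset M p")
    case False
    have "pay p (X i \<inter> Lset M p) \<le> pay p (X i - {e})"
      unfolding pay_def
      by (rule sum_mono2) (use finXi False pos in auto)
    then show ?thesis using pL by simp
  next
    case True
    have e0ne: "e0 \<noteq> e" using True e0 assms(1) unfolding Lset_def by auto
    have e0L: "e0 \<notin> Lset M p" using e0 assms(1) unfolding Lset_def by auto
    let ?S = "insert e0 ((X i \<inter> Lset M p) - {e})"
    have finS: "finite ((X i \<inter> Lset M p) - {e})" using finXi by simp
    have "pay p ?S = p e0 + pay p ((X i \<inter> Lset M p) - {e})"
      unfolding pay_def using finS e0L by simp
    also have "pay p ((X i \<inter> Lset M p) - {e}) = real (card ((X i \<inter> Lset M p) - {e}))"
      unfolding pay_def Lset_def by simp
    also have "card ((X i \<inter> Lset M p) - {e}) = card (X i \<inter> Lset M p) - 1"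
      using True e by simp
    finally have "pay p ?S = k + real (card (X i \<inter> Lset M p) - 1)" using e0 by simp
    moreover have "card (X i \<inter> Lset M p) \<ge> 1"
      using True e finXi by (metis IntI One_nat_def Suc_leI card_gt_0_iff empty_iff finite_Int)
    ultimately have "pay p ?S \<ge> real (card (X i \<inter> Lset M p))" using assms(1) by simp
    moreover have "pay p ?S \<le> pay p (X i - {e})"
      unfolding pay_def
      by (rule sum_mono2) (use finXi e0 e0ne pos in auto)
    ultimately show ?thesis by simp
  qed
  then show "card (X i \<inter> Lset M p) \<le> card (X j)" using pe pXj by simp
qed

end
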